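(* For every integer $n\ge 1$, the functions of $r\in\mathbb N$ given by $\sum_{i=0}^{w_{n-1}(r)}|\varphi^i(\xi)|$, by $w_n(r)$, and by $\exp^n(r)$ are pairwise $\simeq$-equivalent.
   Context: Let $F_2$ be the free group on $\xi,\nu$ and let $\varphi:F_2\to F_2$ be the automorphism $\varphi(\xi)=\xi\nu\xi$, $\varphi(\nu)=\xi$; $|\cdot|$ denotes word length with respect to $\{\xi,\nu\}$. Define $w_0(r)=r$ and inductively $w_n(r)=|\varphi^{w_{n-1}(r)}(\xi)|$ for $r\in\mathbb N$. $\exp^n$ is the $n$-fold composition of the exponential function. For functions $f,g$, $f\preceq g$ means there is $C>0$ with $f(x)\le C\,g(Cx)+Cx$ for all $x$, and $f\simeq g$ means $f\preceq g$ and $g\preceq f$. *)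

theory Defs
  imports Complex_Main
begin

text \<open>Free group F_2 on generators xi, nu, modelled by reduced words over
  letters (generator, inverted?).  Group elements are reduced words.\<close>

datatype gen = Xi | Nu

type_synonym letter = "gen \<times> bool"   (* (a, False) = a, (a, True) = a^-1 *)

definition inv_letter :: "letter \<Rightarrow> letter" where
  "inv_letter l = (fst l, \<not> snd l)"

fun push :: "letter \<Rightarrow> letter list \<Rightarrow> letter list" where
  "push l [] = [l]"
| "push l (m # ms) = (if m = inv_letter l then ms else l # m # ms)"

definition reduce :: "letter list \<Rightarrow> letter list" where
  "reduce w = rev (foldl (\<lambda>acc l. push l acc) [] w)"

definition inv_word :: "letter list \<Rightarrow> letter list" where
  "inv_word w = rev (map inv_letter w)"

fun phi_gen :: "gen \<Rightarrow> letter list" where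
  "phi_gen Xi = [(Xi, False), (Nu, False), (Xi, False)]"
| "phi_gen Nu = [(Xi, False)]"

definition phi_letter :: "letter \<Rightarrow> letter list" where
  "phi_letter l = (if snd l then inv_word (phi_gen (fst l)) else phi_gen (fst l))"

definition phi :: "letter list \<Rightarrow> letter list" where
  "phi w = reduce (concat (map phi_letter w))"

definition wlen :: "letter list \<Rightarrow> nat" where
  "wlen w = length (reduce w)"

definition xi :: "letter list" where
  "xi = [(Xi, False)]"

fun wn :: "nat \<Rightarrow> nat \<Rightarrow> nat" where
  "wn 0 r = r"
| "wn (Suc n) r = wlen ((phi ^^ (wn n r)) xi)"

definition preceq :: "(nat \<Rightarrow> real) \<Rightarrow> (nat \<Rightarrow> real) \<Rightarrow> bool" where
  "preceq f g \<longleftrightarrow> (\<exists>C::nat. C > 0 \<and> (\<forall>x. f x \<le> real C * g (C * x) + real C * real x))"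

definition simeq :: "(nat \<Rightarrow> real) \<Rightarrow> (nat \<Rightarrow> real) \<Rightarrow> bool" where
  "simeq f g \<longleftrightarrow> preceq f g \<and> preceq g f"

end

theory Submission
  imports Defs
begin

definition pos :: "letter list \<Rightarrow> bool" where
  "pos w \<longleftrightarrow> (\<forall>l\<in>set w. snd l = False)"

lemma foldl_push_pos:
  "pos w \<Longrightarrow> pos acc \<Longrightarrow> foldl (\<lambda>acc l. push l acc) acc w = rev w @ acc"
proof (induction w arbitrary: acc)
  case Nil
  then show ?case by simp
next
  case (Cons a w)
  have pa: "snd a = False" using Cons.prems by (simp add: pos_def)
  have pu: "push a acc = a # acc"
  proof (cases acc)
    case Nil
    then show ?thesis by simp
  next
    case (Cons m ms)
    with \<open>pos acc\<close> have "snd m = False" by (simp add: pos_def)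
    then show ?thesis using pa Cons by (auto simp: inv_letter_def)
  qed
  have "pos (a # acc)" using pa Cons.prems by (simp add: pos_def)
  moreover have "pos w" using Cons.prems by (simp add: pos_def)
  ultimately show ?case using Cons.IH pu by simp
qed

lemma reduce_pos: "pos w \<Longrightarrow> reduce w = w"
  by (simp add: reduce_def foldl_push_pos pos_def)

definition img :: "letter list \<Rightarrow> letter list" where
  "img w = concat (map (\<lambda>l. phi_gen (fst l)) w)"

lemma phi_gen_pos: "l \<in> set (phi_gen g) \<Longrightarrow> snd l = False"
  by (cases g) auto

lemma img_pos: "pos (img w)"
  using phi_gen_pos by (auto simp: img_def pos_def)

lemma phi_pos: "pos w \<Longrightarrow> phi w = img w"
proof -
  assume p: "pos w"
  have "map phi_letter w = map (\<lambda>l. phi_gen (fst l)) w"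
    using p by (auto simp: pos_def phi_letter_def)
  then have "phi w = reduce (img w)" unfolding phi_def img_def by metis
  then show ?thesis using reduce_pos[OF img_pos] by simp
qed

definition cX :: "letter list \<Rightarrow> nat" where "cX w = length (filter (\<lambda>l. fst l = Xi) w)"
definition cN :: "letter list \<Rightarrow> nat" where "cN w = length (filter (\<lambda>l. fst l = Nu) w)"

lemma cons_cases: "cX (a # w) = (if fst a = Xi then Suc (cX w) else cX w) \<and>
   cN (a # w) = (if fst a = Nu then Suc (cN w) else cN w)"
  by (simp add: cX_def cN_def)

lemma len_c: "length w = cX w + cN w"
proof (induction w)
  case Nil
  then show ?case by (simp add: cX_def cN_def)
next
  case (Cons a w)
  then show ?case using cons_cases[of a w] by (cases "fst a") auto
qed

lemma c_img: "cX (img w) = 2 * cX w + cN w \<and> cN (img w) = cX w"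
proof (induction w)
  case Nil
  then show ?case by (simp add: cX_def cN_def img_def)
next
  case (Cons a w)
  then show ?case using cons_cases[of a w] by (cases "fst a") (auto simp: cX_def cN_def img_def)
qed

definition P :: "nat \<Rightarrow> letter list" where "P i = (phi ^^ i) xi"

lemma P_Suc: "P (Suc i) = phi (P i)" by (simp add: P_def)

lemma P_props: "pos (P i) \<and> cN (P i) \<le> cX (P i)"
proof (induction i)
  case 0
  then show ?case by (simp add: P_def xi_def pos_def cX_def cN_def)
next
  case (Suc i)
  then show ?case using phi_pos[of "P i"] img_pos c_img[of "P i"] by (simp add: P_Suc)
qed

definition xl :: "nat \<Rightarrow> nat" where "xl i = wlen ((phi ^^ i) xi)"

lemma xl_P: "xl i = cX (P i) + cN (P i)"
  using P_props[of i] reduce_pos len_c by (simp add: xl_def wlen_def P_def[symmetric])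

lemma xl_Suc: "xl (Suc i) = 3 * cX (P i) + cN (P i)"
  using P_props[of i] phi_pos[of "P i"] c_img[of "P i"] by (simp add: xl_P P_Suc)

lemma xl_0: "xl 0 = 1" by (simp add: xl_P P_def xi_def cX_def cN_def)

lemma xl_step: "2 * xl i \<le> xl (Suc i) \<and> xl (Suc i) \<le> 3 * xl i"
  using xl_Suc[of i] xl_P[of i] P_props[of i] by simp

lemma xl_bounds: "2 ^ i \<le> xl i \<and> xl i \<le> 3 ^ i"
proof (induction i)
  case 0
  then show ?case by (simp add: xl_0)
next
  case (Suc i)
  then show ?case using xl_step[of i] by auto
qed

lemma xl_mono: "i \<le> j \<Longrightarrow> xl i \<le> xl j"
proof -
  have "\<And>n. xl n \<le> xl (Suc n)" using xl_step by (metis le_add2 mult_2 order_trans)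
  then show "i \<le> j \<Longrightarrow> xl i \<le> xl j" by (rule lift_Suc_mono_le)
qed

lemma wn_Suc: "wn (Suc n) r = xl (wn n r)" by (simp add: xl_def)

lemma wn_mono: "r \<le> s \<Longrightarrow> wn n r \<le> wn n s"
  by (induction n) (auto simp del: wn.simps(2) simp: wn_Suc intro: xl_mono)

lemma sum_xl: "(\<Sum>i=0..m. xl i) \<le> 2 * xl m"
proof (induction m)
  case 0
  then show ?case by (simp add: xl_0)
next
  case (Suc m)
  then show ?case using xl_step[of m] by (simp add: sum.atLeast0_atMost_Suc)
qed

lemma E_nonneg: "0 \<le> a \<Longrightarrow> 0 \<le> (exp ^^ n) (a::real)"
  by (induction n) auto

lemma E_ge1: "0 \<le> a \<Longrightarrow> 1 \<le> (exp ^^ Suc n) (a::real)"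
  using E_nonneg[of a n] by simp

lemma E_mono: "a \<le> b \<Longrightarrow> (exp ^^ n) a \<le> (exp ^^ n) (b::real)"
  by (induction n) auto

lemma exp1_ge2: "2 \<le> exp (1::real)"
  using exp_ge_add_one_self[of "1::real"] by simp

lemma E_B: "0 \<le> a \<Longrightarrow> (exp ^^ k) a + 1 \<le> (exp ^^ k) (a + 1::real)"
proof (induction k)
  case 0
  then show ?case by simp
next
  case (Suc k)
  define t where "t = (exp ^^ k) a"
  have t0: "0 \<le> t" using E_nonneg[OF Suc.prems] t_def by simp
  have "exp t + 1 \<le> exp t * 2" using t0 by simp
  also have "\<dots> \<le> exp t * exp 1" using exp1_ge2 by simp
  also have "\<dots> = exp (t + 1)" by (simp add: exp_add)
  also have "\<dots> \<le> exp ((exp ^^ k) (a + 1))" using Suc t_def by simp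
  finally show ?case by (simp add: t_def)
qed

lemma E_A: "0 \<le> a \<Longrightarrow> 2 * (exp ^^ Suc n) a \<le> (exp ^^ Suc n) (a + 1::real)"
proof -
  assume a: "0 \<le> a"
  define t where "t = (exp ^^ n) a"
  have "2 * exp t \<le> exp 1 * exp t" using exp1_ge2 by simp
  also have "\<dots> = exp (t + 1)" by (simp add: exp_add)
  also have "\<dots> \<le> exp ((exp ^^ n) (a + 1))" using E_B[OF a, of n] t_def by simp
  finally show ?thesis by (simp add: t_def)
qed

lemma pow3: "(3::real) ^ m \<le> exp (2 * real m)"
proof -
  have "exp (2 * real m) = exp 2 ^ m" using exp_of_nat_mult[of m "2::real"] by (simp add: mult.commute)
  moreover have "(3::real) \<le> exp 2" using exp_ge_add_one_self[of "2::real"] by simp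
  ultimately show ?thesis by (simp add: power_mono)
qed

lemma pow2: "exp (real m / 2) \<le> (2::real) ^ m"
proof -
  have e: "exp (real m / 2) = exp (1/2) ^ m" using exp_of_nat_mult[of m "1/2::real"] by simp
  have "exp (1/2::real) * exp (1/2) = exp 1" by (simp flip: exp_add)
  also have "\<dots> \<le> 3" by (rule exp_le)
  finally have h: "exp (1/2::real) * exp (1/2) \<le> 3" .
  have "exp (1/2::real) \<le> 2"
  proof (rule ccontr)
    assume "\<not> exp (1/2::real) \<le> 2"
    then have "2 < exp (1/2::real)" by simp
    then have "2 * 2 < exp (1/2::real) * exp (1/2)" by (intro mult_strict_mono) auto
    with h show False by simp
  qed
  then show ?thesis using e by (simp add: power_mono)
qed

lemma exp3: "8 \<le> exp (3::real)"
proof -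
  have "exp (3::real) = exp 1 ^ 3" using exp_of_nat_mult[of 3 "1::real"] by simp
  moreover have "(2::real) ^ 3 \<le> exp 1 ^ 3" using exp1_ge2 by (intro power_mono) auto
  ultimately show ?thesis by simp
qed

lemma upper: "real (wn (Suc n) r) \<le> (exp ^^ Suc n) (2 * real r + real n + 1)"
proof (induction n)
  case 0
  have "real (wn (Suc 0) r) = real (xl r)" by (simp add: xl_def)
  also have "\<dots> \<le> 3 ^ r" using xl_bounds[of r] by (metis of_nat_le_iff of_nat_numeral of_nat_power)
  also have "\<dots> \<le> exp (2 * real r)" by (rule pow3)
  also have "\<dots> \<le> exp (2 * real r + 1)" by simp
  finally show ?case by simp
next
  case (Suc n)
  define m where "m = wn (Suc n) r"
  define a where "a = 2 * real r + real n + 1"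
  have a0: "0 \<le> a" by (simp add: a_def)
  have "real (wn (Suc (Suc n)) r) = real (xl m)" by (simp add: xl_def m_def)
  also have "\<dots> \<le> 3 ^ m" using xl_bounds[of m] by (metis of_nat_le_iff of_nat_numeral of_nat_power)
  also have "\<dots> \<le> exp (2 * real m)" by (rule pow3)
  also have "\<dots> \<le> exp (2 * (exp ^^ Suc n) a)" using Suc m_def a_def by simp
  also have "\<dots> \<le> exp ((exp ^^ Suc n) (a + 1))" using E_A[OF a0, of n] by simp
  finally show ?case by (simp add: a_def add_ac)
qed

lemma lower: "1 \<le> r \<Longrightarrow> 2 * (exp ^^ n) (real r) + 6 \<le> real (wn n (8 * r))"
proof (induction n)
  case 0
  then show ?case by simp
next
  case (Suc n)
  define m where "m = wn n (8 * r)"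
  define t where "t = (exp ^^ n) (real r)"
  have hm: "2 * t + 6 \<le> real m" using Suc by (simp add: m_def t_def)
  have t0: "0 \<le> t" using E_nonneg[of "real r" n] t_def by simp
  have "2 * exp t + 6 \<le> exp t * 8" using t0 by simp
  also have "\<dots> \<le> exp t * exp 3" using exp3 by simp
  also have "\<dots> = exp (t + 3)" by (simp add: exp_add)
  also have "\<dots> \<le> exp (real m / 2)" using hm by simp
  also have "\<dots> \<le> 2 ^ m" by (rule pow2)
  also have "\<dots> \<le> real (xl m)" using xl_bounds[of m] by (metis of_nat_le_iff of_nat_numeral of_nat_power)
  also have "\<dots> = real (wn (Suc n) (8 * r))" by (simp add: xl_def m_def)
  finally show ?case by (simp add: t_def)
qed

lemma S_bounds:
  "wn (Suc k) r \<le> (\<Sum>i=0..wn k r. wlen ((phi ^^ i) xi)) \<and>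
   (\<Sum>i=0..wn k r. wlen ((phi ^^ i) xi)) \<le> 2 * wn (Suc k) r"
proof -
  have eq: "(\<Sum>i=0..wn k r. wlen ((phi ^^ i) xi)) = sum xl {0..wn k r}" by (simp add: xl_def)
  have "xl (wn k r) \<le> sum xl {0..wn k r}" by (rule member_le_sum) auto
  then show ?thesis using sum_xl[of "wn k r"] eq by (simp add: wn_Suc del: wn.simps(2))
qed

lemma wn_ge1: "1 \<le> wn (Suc k) r"
proof -
  have "(1::nat) \<le> xl (wn k r)" by (metis le_trans one_le_numeral one_le_power xl_bounds)
  then show ?thesis by (simp add: wn_Suc del: wn.simps(2))
qed

lemma ceil_aux: "x \<le> real (a + nat \<lceil>x\<rceil>)"
  using real_nat_ceiling_ge[of x] by simp

lemma U: "\<exists>C::nat. C > 0 \<and> (\<forall>r. real (wn (Suc k) r) \<le> real C * (exp ^^ Suc k) (real C * real r))"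
proof -
  define C where "C = k + 3 + nat \<lceil>(exp ^^ Suc k) (real k + 1)\<rceil>"
  have Cge: "real k + 3 \<le> real C" using exp_gt_zero by (simp add: C_def) (smt (verit) exp_gt_zero)
  have Cge2: "(exp ^^ Suc k) (real k + 1) \<le> real C"
    unfolding C_def by (metis ceil_aux)
  have "real (wn (Suc k) r) \<le> real C * (exp ^^ Suc k) (real C * real r)" for r
  proof (cases "r = 0")
    case True
    have "real (wn (Suc k) r) \<le> (exp ^^ Suc k) (real k + 1)" using upper[of k r] True by (simp add: add_ac)
    also have "\<dots> \<le> real C" by (rule Cge2)
    also have "\<dots> = real C * 1" by simp
    also have "\<dots> \<le> real C * (exp ^^ Suc k) (real C * real r)"
      using E_ge1[of "real C * real r" k] by (intro mult_left_mono) auto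
    finally show ?thesis .
  next
    case False
    then have r1: "1 \<le> real r" by simp
    have "2 * real r + real k + 1 \<le> (real k + 3) * real r" using r1
      using mult_left_mono[OF r1, of "real k"] by (simp add: algebra_simps)
    also have "\<dots> \<le> real C * real r" using Cge by (simp add: mult_right_mono)
    finally have le: "2 * real r + real k + 1 \<le> real C * real r" .
    have "real (wn (Suc k) r) \<le> (exp ^^ Suc k) (2 * real r + real k + 1)" by (rule upper)
    also have "\<dots> \<le> (exp ^^ Suc k) (real C * real r)" using le by (rule E_mono)
    also have "\<dots> \<le> real C * (exp ^^ Suc k) (real C * real r)"
      using E_ge1[of "real C * real r" k] Cge by (simp add: mult_le_cancel_right1) 
    finally show ?thesis .
  qed
  moreover have "C > 0" by (simp add: C_def)
  ultimately show ?thesis by blast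
qed

lemma L: "\<exists>C::nat. C > 0 \<and> (\<forall>r. (exp ^^ Suc k) (real r) \<le> real C * real (wn (Suc k) (C * r)))"
proof -
  define C where "C = 8 + nat \<lceil>(exp ^^ Suc k) (0::real)\<rceil>"
  have Cge: "8 \<le> C" by (simp add: C_def)
  have Cge2: "(exp ^^ Suc k) (0::real) \<le> real C"
    unfolding C_def by (metis ceil_aux)
  have "(exp ^^ Suc k) (real r) \<le> real C * real (wn (Suc k) (C * r))" for r
  proof (cases "r = 0")
    case True
    have "(exp ^^ Suc k) (real r) \<le> real C" using Cge2 True by simp
    also have "\<dots> = real C * 1" by simp
    also have "\<dots> \<le> real C * real (wn (Suc k) (C * r))"
      using wn_ge1[of k "C * r"] by (intro mult_left_mono) auto
    finally show ?thesis .
  next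
    case False
    then have r1: "1 \<le> r" by simp
    have "(exp ^^ Suc k) (real r) \<le> 2 * (exp ^^ Suc k) (real r) + 6"
      using E_nonneg[of "real r" "Suc k"] by simp
    also have "\<dots> \<le> real (wn (Suc k) (8 * r))" by (rule lower[OF r1])
    also have "\<dots> \<le> real (wn (Suc k) (C * r))"
    proof -
      have "wn (Suc k) (8 * r) \<le> wn (Suc k) (C * r)" by (rule wn_mono) (use Cge in simp)
      then show ?thesis by (simp only: of_nat_le_iff)
    qed
    also have "\<dots> \<le> real C * real (wn (Suc k) (C * r))" using Cge
      by (simp add: mult_le_cancel_right1)
    finally show ?thesis .
  qed
  moreover have "C > 0" by (simp add: C_def)
  ultimately show ?thesis by blast
qed

theorem lemma5p1:
  fixes n :: nat
  assumes "n \<ge> 1"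
  shows "simeq (\<lambda>r. real (\<Sum>i=0..wn (n - 1) r. wlen ((phi ^^ i) xi))) (\<lambda>r. real (wn n r))
       \<and> simeq (\<lambda>r. real (wn n r)) (\<lambda>r. (exp ^^ n) (real r))
       \<and> simeq (\<lambda>r. real (\<Sum>i=0..wn (n - 1) r. wlen ((phi ^^ i) xi))) (\<lambda>r. (exp ^^ n) (real r))"
proof -
  obtain k where n: "n = Suc k" using assms by (cases n) auto
  have nk: "n - 1 = k" using n by simp
  define S where "S = (\<lambda>r. (\<Sum>i=0..wn k r. wlen ((phi ^^ i) xi)))"
  define W where "W = (\<lambda>r. wn (Suc k) r)"
  define E where "E = (\<lambda>r. (exp ^^ Suc k) (real r))"
  have SB: "W r \<le> S r" "S r \<le> 2 * W r" for r using S_bounds[of k r] by (simp_all add: S_def W_def)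
  have Wm: "r \<le> s \<Longrightarrow> real (W r) \<le> real (W s)" for r s
    unfolding W_def of_nat_le_iff by (rule wn_mono)
  have E0: "0 \<le> E r" for r using E_nonneg[of "real r" "Suc k"] by (simp add: E_def)
  have Em: "r \<le> s \<Longrightarrow> E r \<le> E s" for r s unfolding E_def by (rule E_mono) simp
  obtain CU :: nat where CU: "CU > 0" "\<And>r. real (W r) \<le> real CU * E (CU * r)"
    using U[of k] unfolding W_def E_def by auto
  obtain CL :: nat where CL: "CL > 0" "\<And>r. E r \<le> real CL * real (W (CL * r))"
    using L[of k] unfolding W_def E_def by auto
  have p1: "preceq (\<lambda>r. real (S r)) (\<lambda>r. real (W r))"
    unfolding preceq_def
  proof (intro exI[of _ 2] conjI allI)
    fix r
    have "real (S r) \<le> 2 * real (W r)" using SB(2)[of r] by (metis of_nat_le_iff of_nat_mult of_nat_numeral)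
    also have "\<dots> \<le> 2 * real (W (2 * r))" using Wm[of r "2*r"] by simp
    finally show "real (S r) \<le> real 2 * real (W (2 * r)) + real 2 * real r" by simp
  qed simp
  have p2: "preceq (\<lambda>r. real (W r)) (\<lambda>r. real (S r))"
    unfolding preceq_def
  proof (intro exI[of _ 1] conjI allI)
    fix r
    have "real (W r) \<le> real (S r)" using SB(1)[of r] by simp
    then show "real (W r) \<le> real 1 * real (S (1 * r)) + real 1 * real r" by simp
  qed simp
  have p3: "preceq (\<lambda>r. real (W r)) E"
    unfolding preceq_def
  proof (intro exI[of _ CU] conjI allI)
    fix r
    show "real (W r) \<le> real CU * E (CU * r) + real CU * real r" using CU(2)[of r] by (simp add: add_increasing2)
  qed (rule CU(1))
  have p4: "preceq E (\<lambda>r. real (W r))"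
    unfolding preceq_def
  proof (intro exI[of _ CL] conjI allI)
    fix r
    show "E r \<le> real CL * real (W (CL * r)) + real CL * real r" using CL(2)[of r] by (simp add: add_increasing2)
  qed (rule CL(1))
  have p5: "preceq (\<lambda>r. real (S r)) E"
    unfolding preceq_def
  proof (intro exI[of _ "2 * CU"] conjI allI)
    fix r
    have "real (S r) \<le> 2 * real (W r)" using SB(2)[of r] by (metis of_nat_le_iff of_nat_mult of_nat_numeral)
    also have "\<dots> \<le> 2 * (real CU * E (CU * r))" using CU(2)[of r] by simp
    also have "\<dots> \<le> 2 * (real CU * E (2 * CU * r))"
      using Em[of "CU * r" "2 * CU * r"] by (intro mult_left_mono) auto
    finally show "real (S r) \<le> real (2 * CU) * E (2 * CU * r) + real (2 * CU) * real r"
      by (simp add: add_increasing2 mult.assoc)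
  qed (use CU(1) in simp)
  have p6: "preceq E (\<lambda>r. real (S r))"
    unfolding preceq_def
  proof (intro exI[of _ CL] conjI allI)
    fix r
    have "E r \<le> real CL * real (W (CL * r))" by (rule CL(2))
    also have "\<dots> \<le> real CL * real (S (CL * r))" using SB(1)[of "CL * r"] by (intro mult_left_mono) auto
    finally show "E r \<le> real CL * real (S (CL * r)) + real CL * real r"
      by (simp add: add_increasing2)
  qed (rule CL(1))
  have "simeq (\<lambda>r. real (S r)) (\<lambda>r. real (W r)) \<and> simeq (\<lambda>r. real (W r)) E \<and> simeq (\<lambda>r. real (S r)) E"
    using p1 p2 p3 p4 p5 p6 by (simp add: simeq_def)
  then show ?thesis unfolding nk unfolding n S_def W_def E_def .
qed

end
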